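(* If $G$ is a $d$-regular Hadamard diagonalizable graph with $d$ odd, then for every vertex $u$ of $G$, $\uparrow^{2}G$ has Laplacian perfect state transfer between $(0,u)$ and $(1,u)$ at time $\frac{\pi}{2}$.
   Context: All graphs are simple, undirected and unweighted. A graph on $N$ vertices is Hadamard diagonalizable if its Laplacian matrix $L=D-A$ is diagonalizable by a Hadamard matrix, i.e. $L=\frac{1}{N}H\Lambda H^T$ for some diagonal $\Lambda$ and some $N\times N$ matrix $H$ with entries $\pm1$ satisfying $HH^T=NI$. The blow-up $\uparrow^{2}G$ has vertex set $\mathbb{Z}_2\times V(G)$, with $(l,u)\sim(m,v)$ iff $u\sim v$ in $G$. A graph with Laplacian $L$ has Laplacian perfect state transfer between $a,b$ at time $\tau$ if $\exp(i\tau L)\mathbf{e}_a=\gamma\mathbf{e}_b$ for some $\gamma\in\mathbb{C}$. *)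

theory Defs
  imports "HOL-Analysis.Analysis" "HOL-Library.Numeral_Type"
begin

definition simple_graph :: "('n \<Rightarrow> 'n \<Rightarrow> bool) \<Rightarrow> bool" where
  "simple_graph E \<longleftrightarrow> (\<forall>u v. E u v \<longrightarrow> E v u) \<and> (\<forall>u. \<not> E u u)"

definition degree :: "('n::finite \<Rightarrow> 'n \<Rightarrow> bool) \<Rightarrow> 'n \<Rightarrow> nat" where
  "degree E u = card {v. E u v}"

definition regular :: "('n::finite \<Rightarrow> 'n \<Rightarrow> bool) \<Rightarrow> nat \<Rightarrow> bool" where
  "regular E d \<longleftrightarrow> (\<forall>u. degree E u = d)"

definition laplacian :: "('n::finite \<Rightarrow> 'n \<Rightarrow> bool) \<Rightarrow> real ^'n^'n" where
  "laplacian E = (\<chi> i j. (if i = j then real (degree E i) else 0) - (if E i j then 1 else 0))"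

definition is_hadamard :: "real^'n^'n \<Rightarrow> bool" where
  "is_hadamard H \<longleftrightarrow> (\<forall>i j. H $ i $ j = 1 \<or> H $ i $ j = -1)
      \<and> H ** transpose H = of_nat CARD('n) *\<^sub>R mat 1"

definition is_diagonal :: "real^'n^'n \<Rightarrow> bool" where
  "is_diagonal M \<longleftrightarrow> (\<forall>i j. i \<noteq> j \<longrightarrow> M $ i $ j = 0)"

definition hadamard_diagonalizable :: "('n::finite \<Rightarrow> 'n \<Rightarrow> bool) \<Rightarrow> bool" where
  "hadamard_diagonalizable E \<longleftrightarrow>
     (\<exists>H \<Lambda>. is_hadamard H \<and> is_diagonal \<Lambda> \<and>
        laplacian E = (1 / real CARD('n)) *\<^sub>R (H ** \<Lambda> ** transpose H))"

definition blowup2 :: "('n \<Rightarrow> 'n \<Rightarrow> bool) \<Rightarrow> (2 \<times> 'n) \<Rightarrow> (2 \<times> 'n) \<Rightarrow> bool" where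
  "blowup2 E x y = E (snd x) (snd y)"

primrec cmatpow :: "complex^'n^'n \<Rightarrow> nat \<Rightarrow> complex^'n^'n" where
  "cmatpow A 0 = mat 1"
| "cmatpow A (Suc k) = A ** cmatpow A k"

text \<open>Matrix exponential, defined entrywise by the (always convergent) power series.\<close>
definition cmat_exp :: "complex^'n^'n \<Rightarrow> complex^'n^'n" where
  "cmat_exp A = (\<chi> i j. \<Sum>k. (cmatpow A k) $ i $ j / of_nat (fact k))"

definition laplacian_pst :: "('n::finite \<Rightarrow> 'n \<Rightarrow> bool) \<Rightarrow> 'n \<Rightarrow> 'n \<Rightarrow> real \<Rightarrow> bool" where
  "laplacian_pst E a b \<tau> \<longleftrightarrow>
     (\<exists>\<gamma>::complex. cmat_exp
          (\<chi> i j. \<i> * complex_of_real \<tau> * complex_of_real (laplacian E $ i $ j)) *v axis a 1 = \<gamma> *s axis b 1)"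

end

theory Submission
  imports Defs
begin

lemma two_cases: "(x::2) = 0 \<or> x = 1" using exhaust_2[of x] by auto
lemma U2: "(UNIV::2 set) = {0,1}" using two_cases by auto
lemma sum2: "(\<Sum>m\<in>(UNIV::2 set). g m) = g 0 + g 1" by (simp add: U2)
lemma sum_pair: "(\<Sum>c\<in>(UNIV::('a::finite \<times> 'b::finite) set). g c) = (\<Sum>m\<in>UNIV. \<Sum>v\<in>UNIV. g (m,v))"
  by (simp only: sum.cartesian_product UNIV_Times_UNIV case_prod_eta)

lemma sum_delta_mult:
  "(\<Sum>c'\<in>(UNIV::'a::finite set). g c' * (if c = c' then 1 else 0)) = (g c :: 'b::comm_semiring_1)"
proof -
  have "(\<Sum>c'\<in>(UNIV::'a set). g c' * (if c = c' then 1 else 0)) = (\<Sum>c'\<in>UNIV. if c = c' then g c' else 0)"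
    by (rule sum.cong) auto
  then show ?thesis by simp
qed

lemma pow_formula:
  fixes M P Q :: "complex^'m::finite^'m" and \<mu> :: "'m \<Rightarrow> complex"
  assumes M: "\<And>i j. M$i$j = (\<Sum>c\<in>UNIV. P$i$c * \<mu> c * Q$c$j)"
    and PQ: "\<And>i j. (\<Sum>c\<in>UNIV. P$i$c * Q$c$j) = (if i=j then 1 else 0)"
    and QP: "\<And>i j. (\<Sum>c\<in>UNIV. Q$i$c * P$c$j) = (if i=j then 1 else 0)"
  shows "cmatpow M k $i$j = (\<Sum>c\<in>UNIV. P$i$c * \<mu> c ^ k * Q$c$j)"
proof (induction k arbitrary: i j)
  case 0
  then show ?case by (simp add: mat_def PQ)
next
  case (Suc k)
  have "cmatpow M (Suc k) $i$j = (\<Sum>l\<in>UNIV. M$i$l * cmatpow M k $l$j)"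
    by (simp add: matrix_matrix_mult_def)
  also have "\<dots> = (\<Sum>l\<in>UNIV. (\<Sum>c\<in>UNIV. P$i$c * \<mu> c * Q$c$l) * (\<Sum>c'\<in>UNIV. P$l$c' * \<mu> c' ^ k * Q$c'$j))"
    by (simp add: M Suc)
  also have "\<dots> = (\<Sum>l\<in>UNIV. \<Sum>c\<in>UNIV. \<Sum>c'\<in>UNIV. (P$i$c * \<mu> c * \<mu> c' ^ k * Q$c'$j) * (Q$c$l * P$l$c'))"
    by (simp add: sum_product mult_ac)
  also have "\<dots> = (\<Sum>c\<in>UNIV. \<Sum>c'\<in>UNIV. \<Sum>l\<in>UNIV. (P$i$c * \<mu> c * \<mu> c' ^ k * Q$c'$j) * (Q$c$l * P$l$c'))"
  proof -
    have "(\<Sum>l\<in>UNIV. \<Sum>c\<in>UNIV. \<Sum>c'\<in>UNIV. (P$i$c * \<mu> c * \<mu> c' ^ k * Q$c'$j) * (Q$c$l * P$l$c'))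
       = (\<Sum>c\<in>UNIV. \<Sum>l\<in>UNIV. \<Sum>c'\<in>UNIV. (P$i$c * \<mu> c * \<mu> c' ^ k * Q$c'$j) * (Q$c$l * P$l$c'))"
      by (rule sum.swap)
    also have "\<dots> = (\<Sum>c\<in>UNIV. \<Sum>c'\<in>UNIV. \<Sum>l\<in>UNIV. (P$i$c * \<mu> c * \<mu> c' ^ k * Q$c'$j) * (Q$c$l * P$l$c'))"
      by (rule sum.cong[OF refl], rule sum.swap)
    finally show ?thesis .
  qed
  also have "\<dots> = (\<Sum>c\<in>UNIV. \<Sum>c'\<in>UNIV. (P$i$c * \<mu> c * \<mu> c' ^ k * Q$c'$j) * (if c = c' then 1 else 0))"
    by (simp add: sum_distrib_left[symmetric] QP)
  also have "\<dots> = (\<Sum>c\<in>UNIV. P$i$c * \<mu> c ^ Suc k * Q$c$j)"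
    by (rule sum.cong[OF refl], subst sum_delta_mult) simp
  finally show ?case .
qed

lemma exp_formula:
  fixes M P Q :: "complex^'m::finite^'m" and \<mu> :: "'m \<Rightarrow> complex"
  assumes M: "\<And>i j. M$i$j = (\<Sum>c\<in>UNIV. P$i$c * \<mu> c * Q$c$j)"
    and PQ: "\<And>i j. (\<Sum>c\<in>UNIV. P$i$c * Q$c$j) = (if i=j then 1 else 0)"
    and QP: "\<And>i j. (\<Sum>c\<in>UNIV. Q$i$c * P$c$j) = (if i=j then 1 else 0)"
  shows "cmat_exp M $i$j = (\<Sum>c\<in>UNIV. P$i$c * exp (\<mu> c) * Q$c$j)"
proof -
  have "(\<lambda>k. \<Sum>c\<in>UNIV. P$i$c * \<mu> c ^ k * Q$c$j / of_nat (fact k)) sums (\<Sum>c\<in>UNIV. P$i$c * exp (\<mu> c) * Q$c$j)"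
  proof (rule sums_sum)
    fix c
    have "(\<lambda>k. \<mu> c ^ k /\<^sub>R fact k) sums exp (\<mu> c)" by (rule exp_converges)
    then have "(\<lambda>k. (P$i$c * Q$c$j) * (\<mu> c ^ k /\<^sub>R fact k)) sums ((P$i$c * Q$c$j) * exp (\<mu> c))"
      by (rule sums_mult)
    then show "(\<lambda>k. P$i$c * \<mu> c ^ k * Q$c$j / of_nat (fact k)) sums (P$i$c * exp (\<mu> c) * Q$c$j)"
      by (simp add: scaleR_conv_of_real mult_ac divide_inverse)
  qed
  then have "(\<lambda>k. cmatpow M k $i$j / of_nat (fact k)) sums (\<Sum>c\<in>UNIV. P$i$c * exp (\<mu> c) * Q$c$j)"
    by (simp add: pow_formula[OF M PQ QP] sum_divide_distrib)
  then show ?thesis unfolding cmat_exp_def by (simp add: sums_iff)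
qed


lemma hadamard_facts:
  fixes H :: "real^'n::finite^'n"
  assumes "is_hadamard H"
  shows "\<And>i j. (\<Sum>k\<in>UNIV. H$i$k * H$j$k) = (if i=j then real CARD('n) else 0)"
    and "\<And>i j. (\<Sum>k\<in>UNIV. H$k$i * H$k$j) = (if i=j then real CARD('n) else 0)"
proof -
  let ?N = "real CARD('n)"
  have N: "?N > 0" by simp
  have HH: "H ** transpose H = ?N *\<^sub>R mat 1" using assms unfolding is_hadamard_def by blast
  show hh: "\<And>i j. (\<Sum>k\<in>UNIV. H$i$k * H$j$k) = (if i=j then ?N else 0)"
  proof -
    fix i j
    have "(H ** transpose H)$i$j = (?N *\<^sub>R mat 1)$i$j" using HH by simp
    then show "(\<Sum>k\<in>UNIV. H$i$k * H$j$k) = (if i=j then ?N else 0)"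
      by (simp add: matrix_matrix_mult_def transpose_def mat_def)
  qed
  have "H ** ((1/?N) *\<^sub>R transpose H) = mat 1"
    by (simp add: vec_eq_iff matrix_matrix_mult_def transpose_def mat_def sum_divide_distrib[symmetric] hh)
  then have I: "((1/?N) *\<^sub>R transpose H) ** H = mat 1"
    using matrix_left_right_inverse by blast
  show "\<And>i j. (\<Sum>k\<in>UNIV. H$k$i * H$k$j) = (if i=j then ?N else 0)"
  proof -
    fix i j
    have "(((1/?N) *\<^sub>R transpose H) ** H)$i$j = mat 1 $i$j" using I by simp
    then have "(\<Sum>k\<in>UNIV. H$k$i * H$k$j) / ?N = (if i=j then 1 else 0)"
      by (simp add: matrix_matrix_mult_def transpose_def mat_def sum_divide_distrib)
    then show "(\<Sum>k\<in>UNIV. H$k$i * H$k$j) = (if i=j then ?N else 0)"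
      using N by (auto simp: field_simps split: if_splits)
  qed
qed

lemma lap_entry:
  fixes E :: "'n::finite \<Rightarrow> 'n \<Rightarrow> bool"
  assumes "regular E d"
  shows "laplacian E $ u $ v = (if u = v then real d else 0) - (if E u v then 1 else 0)"
  using assms by (simp add: laplacian_def regular_def)

lemma blow_degree:
  fixes E :: "'n::finite \<Rightarrow> 'n \<Rightarrow> bool"
  assumes "regular E d"
  shows "degree (blowup2 E) x = 2 * d"
proof -
  have "{y. blowup2 E x y} = (UNIV::2 set) \<times> {v. E (snd x) v}"
    by (auto simp: blowup2_def)
  then show ?thesis using assms
    by (simp add: degree_def regular_def card_cartesian_product)
qed


lemma eig_even:
  fixes E :: "'n::finite \<Rightarrow> 'n \<Rightarrow> bool" and H \<Lambda> :: "real^'n^'n"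
  assumes sg: "simple_graph E" and reg: "regular E d" and hadH: "is_hadamard H"
    and HL: "\<And>u u'. (\<Sum>v\<in>UNIV. H$u$v * \<Lambda>$v$v * H$u'$v) = real CARD('n) * laplacian E $u$u'"
  shows "\<exists>z::int. \<Lambda>$v$v = 2 * of_int z"
proof -
  let ?N = "real CARD('n)"
  let ?lam = "\<lambda>k. \<Lambda>$k$k"
  note hth = hadamard_facts(2)[OF hadH]
  note hh = hadamard_facts(1)[OF hadH]
  have pm: "\<And>i j. H$i$j = 1 \<or> H$i$j = -1" using hadH unfolding is_hadamard_def by blast
  define Hi where "Hi j = (if H$j$v = 1 then 1 else -1 :: int)" for j
  have HHi: "H$j$v = of_int (Hi j)" for j using pm[of j v] by (auto simp: Hi_def)
  define Lint where "Lint j = (if v = j then int d else 0) - (if E v j then 1 else 0)" for j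
  have LL: "laplacian E $ v $ j = of_int (Lint j)" for j by (simp add: lap_entry[OF reg] Lint_def)
  have "(\<Sum>j\<in>UNIV. laplacian E $v$j * H$j$v) = (\<Sum>j\<in>UNIV. (\<Sum>k\<in>UNIV. H$v$k * ?lam k * H$j$k) / ?N * H$j$v)"
  proof (rule sum.cong[OF refl])
    fix j
    have "laplacian E $v$j = (\<Sum>k\<in>UNIV. H$v$k * ?lam k * H$j$k) / ?N"
      using HL[of v j] by simp
    then show "laplacian E $v$j * H$j$v = (\<Sum>k\<in>UNIV. H$v$k * ?lam k * H$j$k) / ?N * H$j$v" by simp
  qed
  also have "\<dots> = (\<Sum>j\<in>UNIV. \<Sum>k\<in>UNIV. H$v$k * ?lam k * (H$j$k * H$j$v) / ?N)"
    by (rule sum.cong[OF refl]) (simp add: sum_divide_distrib sum_distrib_right mult.assoc)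
  also have "\<dots> = (\<Sum>k\<in>UNIV. \<Sum>j\<in>UNIV. H$v$k * ?lam k * (H$j$k * H$j$v) / ?N)"
    by (rule sum.swap)
  also have "\<dots> = (\<Sum>k\<in>UNIV. H$v$k * ?lam k * (\<Sum>j\<in>UNIV. H$j$k * H$j$v)) / ?N"
    by (simp add: sum_divide_distrib sum_distrib_left)
  also have "\<dots> = (\<Sum>k\<in>UNIV. H$v$k * ?lam k * (if k = v then ?N else 0)) / ?N"
    by (simp add: hth)
  also have "\<dots> = H$v$v * ?lam v"
    by (simp add: if_distrib[of "\<lambda>x. _ * x"] cong: if_cong)
  finally have e1: "(\<Sum>j\<in>UNIV. laplacian E $v$j * H$j$v) = H$v$v * ?lam v" .
  have "?lam v = H$v$v * (H$v$v * ?lam v)" using pm[of v v] by auto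
  also have "\<dots> = of_int (Hi v * (\<Sum>j\<in>UNIV. Lint j * Hi j))"
    using e1 by (simp add: LL HHi)
  finally have lamv: "?lam v = of_int (Hi v * (\<Sum>j\<in>UNIV. Lint j * Hi j))" .
  have sumL: "(\<Sum>j\<in>UNIV. Lint j) = 0"
  proof -
    have "(\<Sum>j\<in>UNIV. Lint j) = (\<Sum>j\<in>UNIV. (if v = j then int d else 0)) - (\<Sum>j\<in>UNIV. (if E v j then 1 else 0))"
      by (simp add: Lint_def sum_subtractf)
    also have "\<dots> = int d - int (card {j. E v j})"
      by (simp add: sum.If_cases)
    also have "\<dots> = 0" using reg by (simp add: regular_def degree_def)
    finally show ?thesis .
  qed
  have "(\<Sum>j\<in>UNIV. Lint j * Hi j) = (\<Sum>j\<in>UNIV. Lint j - 2 * (Lint j * (if Hi j = 1 then 0 else 1)))"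
    by (rule sum.cong) (auto simp: Hi_def)
  also have "\<dots> = 2 * (- (\<Sum>j\<in>UNIV. Lint j * (if Hi j = 1 then 0 else 1)))"
    by (simp add: sum_subtractf sum_distrib_left[symmetric] sumL)
  finally have "(\<Sum>j\<in>UNIV. Lint j * Hi j) = 2 * (- (\<Sum>j\<in>UNIV. Lint j * (if Hi j = 1 then 0 else 1)))" .
  then show ?thesis using lamv
    by (intro exI[of _ "Hi v * (- (\<Sum>j\<in>UNIV. Lint j * (if Hi j = 1 then 0 else 1)))"]) simp
qed


theorem corollary5:
  fixes E :: "'n::finite \<Rightarrow> 'n \<Rightarrow> bool" and d :: nat
  assumes "simple_graph E" and "regular E d" and "hadamard_diagonalizable E" and "odd d"
  shows "\<forall>u. laplacian_pst (blowup2 E) (0, u) (1, u) (pi / 2)"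
proof
  fix u0 :: 'n
  note sg = assms(1) and reg = assms(2)
  obtain H \<Lambda> where hadH: "is_hadamard H" and diag: "is_diagonal \<Lambda>"
    and Leq: "laplacian E = (1 / real CARD('n)) *\<^sub>R (H ** \<Lambda> ** transpose H)"
    using assms(3) unfolding hadamard_diagonalizable_def by blast
  let ?N = "real CARD('n)"
  have N: "?N > 0" by simp
  define lam where "lam k = \<Lambda>$k$k" for k
  note hh = hadamard_facts(1)[OF hadH]
  note hth = hadamard_facts(2)[OF hadH]
  have HL: "(\<Sum>v\<in>UNIV. H$u$v * \<Lambda>$v$v * H$u'$v) = ?N * laplacian E $u$u'" for u u'
  proof -
    have inner: "(\<Sum>k\<in>UNIV. H$u$k * \<Lambda>$k$l) = H$u$l * \<Lambda>$l$l" for l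
    proof -
      have "(\<Sum>k\<in>UNIV. H$u$k * \<Lambda>$k$l) = (\<Sum>k\<in>UNIV. if k = l then H$u$l * \<Lambda>$l$l else 0)"
        by (rule sum.cong) (use diag in \<open>auto simp: is_diagonal_def\<close>)
      then show ?thesis by simp
    qed
    have "laplacian E $u$u' = (\<Sum>l\<in>UNIV. (\<Sum>k\<in>UNIV. H$u$k * \<Lambda>$k$l) * H$u'$l) / ?N"
      by (simp add: Leq matrix_matrix_mult_def transpose_def)
    also have "\<dots> = (\<Sum>v\<in>UNIV. H$u$v * \<Lambda>$v$v * H$u'$v) / ?N"
      by (simp add: inner)
    finally show ?thesis using N by simp
  qed
  have ev: "\<exists>z::int. lam v = 2 * of_int z" for v
    unfolding lam_def by (rule eig_even[OF sg reg hadH HL])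
  define s :: "2 \<Rightarrow> 2 \<Rightarrow> real" where "s l m = (if l = 1 \<and> m = 1 then -1 else 1)" for l m
  define Hb where "Hb x c = s (fst x) (fst c) * H$(snd x)$(snd c)" for x c :: "2 \<times> 'n"
  define eig where "eig c = (if fst c = 0 then 2 * lam (snd c) else 2 * real d)" for c :: "2 \<times> 'n"
  have s_simps: "s 0 m = 1" "s l 0 = 1" "s 1 1 = -1" for l m by (auto simp: s_def)
  have B2: "(\<Sum>c\<in>UNIV. Hb x c * Hb y c) = (if x = y then 2 * ?N else 0)" for x y
  proof -
    obtain l u where x: "x = (l,u)" by (cases x)
    obtain l' u' where y: "y = (l',u')" by (cases y)
    have "(\<Sum>c\<in>UNIV. Hb x c * Hb y c) = (\<Sum>m\<in>UNIV. s l m * s l' m) * (\<Sum>v\<in>UNIV. H$u$v * H$u'$v)"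
      by (simp add: sum_pair x y Hb_def sum_product mult_ac)
    also have "\<dots> = (if x = y then 2 * ?N else 0)"
      using two_cases[of l] two_cases[of l'] by (auto simp: sum2 hh x y s_def)
    finally show ?thesis .
  qed
  have B3: "(\<Sum>c\<in>UNIV. Hb c x * Hb c y) = (if x = y then 2 * ?N else 0)" for x y
  proof -
    obtain l u where x: "x = (l,u)" by (cases x)
    obtain l' u' where y: "y = (l',u')" by (cases y)
    have "(\<Sum>c\<in>UNIV. Hb c x * Hb c y) = (\<Sum>m\<in>UNIV. s m l * s m l') * (\<Sum>v\<in>UNIV. H$v$u * H$v$u')"
      by (simp add: sum_pair x y Hb_def sum_product mult_ac)
    also have "\<dots> = (if x = y then 2 * ?N else 0)"
      using two_cases[of l] two_cases[of l'] by (auto simp: sum2 hth x y s_def)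
    finally show ?thesis .
  qed
  have B1: "laplacian (blowup2 E) $x$y = (\<Sum>c\<in>UNIV. Hb x c * eig c * Hb y c) / (2 * ?N)" for x y
  proof -
    obtain l u where x: "x = (l,u)" by (cases x)
    obtain l' u' where y: "y = (l',u')" by (cases y)
    have "(\<Sum>c\<in>UNIV. Hb x c * eig c * Hb y c)
        = 2 * (\<Sum>v\<in>UNIV. H$u$v * \<Lambda>$v$v * H$u'$v) + s l 1 * s l' 1 * (2 * real d) * (\<Sum>v\<in>UNIV. H$u$v * H$u'$v)"
      by (simp add: sum_pair sum2 x y Hb_def eig_def s_simps lam_def sum_distrib_left mult_ac)
    also have "\<dots> = 2 * (?N * laplacian E $u$u') + s l 1 * s l' 1 * (2 * real d) * (if u = u' then ?N else 0)"
      by (simp only: HL hh)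
    also have "\<dots> = 2 * ?N * laplacian (blowup2 E) $x$y"
      using two_cases[of l] two_cases[of l'] sg reg
      by (auto simp: simple_graph_def regular_def x y s_def lap_entry[OF reg] laplacian_def blow_degree[OF reg] blowup2_def algebra_simps)
    finally show ?thesis using N by simp
  qed
  show "laplacian_pst (blowup2 E) (0, u0) (1, u0) (pi / 2)"
  proof -
    define P :: "complex^(2\<times>'n)^(2\<times>'n)" where "P = (\<chi> x c. complex_of_real (Hb x c))"
    define Q :: "complex^(2\<times>'n)^(2\<times>'n)" where "Q = (\<chi> c y. complex_of_real (Hb y c / (2 * ?N)))"
    define \<mu> where "\<mu> c = \<i> * complex_of_real (pi/2) * complex_of_real (eig c)" for c
    define M :: "complex^(2\<times>'n)^(2\<times>'n)" where
      "M = (\<chi> i j. \<i> * complex_of_real (pi/2) * complex_of_real (laplacian (blowup2 E) $ i $ j))"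
    have hM: "M$i$j = (\<Sum>c\<in>UNIV. P$i$c * \<mu> c * Q$c$j)" for i j
    proof -
      have "(\<Sum>c\<in>UNIV. P$i$c * \<mu> c * Q$c$j) = \<i> * complex_of_real (pi/2) * complex_of_real ((\<Sum>c\<in>UNIV. Hb i c * eig c * Hb j c) / (2 * ?N))"
        by (simp add: P_def Q_def \<mu>_def sum_distrib_left sum_divide_distrib mult_ac)
      then show ?thesis by (simp add: M_def B1)
    qed
    have hPQ: "(\<Sum>c\<in>UNIV. P$i$c * Q$c$j) = (if i = j then 1 else 0)" for i j
    proof -
      have "(\<Sum>c\<in>UNIV. P$i$c * Q$c$j) = complex_of_real ((\<Sum>c\<in>UNIV. Hb i c * Hb j c) / (2 * ?N))"
        by (simp add: P_def Q_def sum_divide_distrib)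
      then show ?thesis using B2[of i j] N by simp
    qed
    have hQP: "(\<Sum>c\<in>UNIV. Q$i$c * P$c$j) = (if i = j then 1 else 0)" for i j
    proof -
      have "(\<Sum>c\<in>UNIV. Q$i$c * P$c$j) = complex_of_real ((\<Sum>c\<in>UNIV. Hb c i * Hb c j) / (2 * ?N))"
        by (simp add: P_def Q_def sum_divide_distrib)
      then show ?thesis using B3[of i j] N by simp
    qed
    have expmu: "exp (\<mu> c) = complex_of_real (s 1 (fst c))" for c
    proof (cases "fst c = 0")
      case True
      obtain z where z: "lam (snd c) = 2 * of_int z" using ev by blast
      have "\<mu> c = \<i> * (of_int z * (of_real pi * 2))"
        using True by (simp add: \<mu>_def eig_def z)
      then show ?thesis using True by (simp add: s_def)
    next
      case False
      then have f1: "fst c = 1" using two_cases by blast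
      obtain k where k: "d = 2 * k + 1" using assms(4) oddE by blast
      have "\<mu> c = \<i> * (of_nat k * (of_real pi * 2)) + \<i> * of_real pi"
        using False by (simp add: \<mu>_def eig_def k algebra_simps)
      then have "exp (\<mu> c) = - 1" by (simp add: exp_add)
      then show ?thesis using f1 by (simp add: s_def)
    qed
    have Hb1: "Hb (1,u0) c = s 1 (fst c) * Hb (0,u0) c" for c
      by (simp add: Hb_def s_simps)
    have col: "cmat_exp M $ x $ (0,u0) = (if x = (1,u0) then 1 else 0)" for x
    proof -
      have "cmat_exp M $ x $ (0,u0) = (\<Sum>c\<in>UNIV. P$x$c * exp (\<mu> c) * Q$c$(0,u0))"
        by (rule exp_formula[OF hM hPQ hQP])
      also have "\<dots> = complex_of_real ((\<Sum>c\<in>UNIV. Hb x c * Hb (1,u0) c) / (2 * ?N))"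
        by (simp add: P_def Q_def expmu Hb1 sum_divide_distrib mult_ac)
      also have "\<dots> = (if x = (1,u0) then 1 else 0)"
        using B2[of x "(1,u0)"] N by simp
      finally show ?thesis .
    qed
    have "cmat_exp M *v axis (0,u0) 1 = 1 *s axis (1,u0) 1"
      by (simp add: vec_eq_iff matrix_vector_mult_def axis_def col if_distrib[of "\<lambda>x. _ * x"] cong: if_cong)
    then show ?thesis unfolding laplacian_pst_def M_def by blast
  qed
qed

end
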